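(* Let $V>0$. Then $\mathcal{C}(V,T,\bar P)\subseteq\hat{\mathcal{C}}(\bar P)$ for every $T>0$, and as $T\to\infty$ the capacity region $\mathcal{C}(V,T,\bar P)$ tends to $\hat{\mathcal{C}}(\bar P)=\{(r_1,r_2): r_1+r_2\le\log_2(1+\bar P\beta_0/H^2),\ r_1,r_2\ge0\}$, i.e. $\mathcal{C}(V,\infty,\bar P)=\hat{\mathcal{C}}(\bar P)$: every point of $\hat{\mathcal{C}}(\bar P)$ is the limit as $T\to\infty$ of rate pairs in $\mathcal{C}(V,T,\bar P)$. Moreover, this limit is achieved by hover-fly-hover (HFH) trajectories with $x_{\rm I}=-D/2$ and $x_{\rm F}=D/2$ combined with TDMA-based transmission; that is, TDMA is capacity-achieving in this limit.
   Context: Fix $D>0$, $H>0$, $\beta_0>0$, $\bar P>0$. Ground users GU 1, GU 2 are at $x_1=-D/2$, $x_2=D/2$; for UAV horizontal position $x$ (altitude $H$), $h_k(x)=\beta_0/((x-x_k)^2+H^2)$. For $T>0$, $V\ge0$: a feasible trajectory is $x:[0,T]\to\mathbb{R}$ with $|\dot x(t)|\le V$; a feasible power allocation is measurable $p_1,p_2\ge0$ with $p_1(t)+p_2(t)\le\bar P$. $\mathcal{C}(x,p)$ is the set of $(r_1,r_2)$, $r_1,r_2\ge0$, with $r_1\le\frac1T\int_0^T\log_2(1+p_1h_1(x))dt$, $r_2\le\frac1T\int_0^T\log_2(1+p_2h_2(x))dt$, $r_1+r_2\le\frac1T\int_0^T\log_2(1+p_1h_1(x)+p_2h_2(x))dt$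 (arguments $t$ suppressed). $\mathcal{C}(V,T,\bar P)$ is the union of $\mathcal{C}(x,p)$ over feasible $x,p$. An HFH trajectory with parameters $-D/2\le x_{\rm I}\le x_{\rm F}\le D/2$, $t_{\rm I},t_{\rm F}\ge0$, $t_{\rm I}+(x_{\rm F}-x_{\rm I})/V+t_{\rm F}=T$, is $x(t)=x_{\rm I}$ for $t\in[0,t_{\rm I}]$, $x(t)=x_{\rm I}+(t-t_{\rm I})V$ for $t\in(t_{\rm I},T-t_{\rm F})$, $x(t)=x_{\rm F}$ for $t\in[T-t_{\rm F},T]$. TDMA-based transmission means that at each time at most one user is served with power $\bar P$, i.e. $(p_1(t),p_2(t))\in\{(\bar P,0),(0,\bar P),(0,0)\}$. *)

theory Defs
  imports "HOL-Analysis.Analysis"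
begin

definition gu_pos :: "real \<Rightarrow> nat \<Rightarrow> real" where
  "gu_pos D k = (if k = 1 then - D / 2 else D / 2)"

definition gain :: "real \<Rightarrow> real \<Rightarrow> real \<Rightarrow> nat \<Rightarrow> real \<Rightarrow> real" where
  "gain beta0 H D k x = beta0 / ((x - gu_pos D k)^2 + H^2)"

definition feasible_traj :: "real \<Rightarrow> real \<Rightarrow> (real \<Rightarrow> real) \<Rightarrow> bool" where
  "feasible_traj V T x \<longleftrightarrow>
     (\<forall>s\<in>{0..T}. \<forall>t\<in>{0..T}. \<bar>x t - x s\<bar> \<le> V * \<bar>t - s\<bar>)"

definition feasible_power :: "real \<Rightarrow> real \<Rightarrow> (real \<Rightarrow> real) \<Rightarrow> (real \<Rightarrow> real) \<Rightarrow> bool" where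
  "feasible_power Pbar T p1 p2 \<longleftrightarrow>
     p1 \<in> borel_measurable lborel \<and> p2 \<in> borel_measurable lborel \<and>
     (\<forall>t\<in>{0..T}. 0 \<le> p1 t \<and> 0 \<le> p2 t \<and> p1 t + p2 t \<le> Pbar)"

definition rate_region ::
  "real \<Rightarrow> real \<Rightarrow> real \<Rightarrow> real \<Rightarrow> (real \<Rightarrow> real) \<Rightarrow> (real \<Rightarrow> real) \<Rightarrow> (real \<Rightarrow> real)
   \<Rightarrow> (real \<times> real) set" where
  "rate_region beta0 H D T x p1 p2 =
     {(r1, r2). 0 \<le> r1 \<and> 0 \<le> r2 \<and>
        r1 \<le> (1 / T) * (LINT t:{0..T}|lborel. log 2 (1 + p1 t * gain beta0 H D 1 (x t))) \<and>
        r2 \<le> (1 / T) * (LINT t:{0..T}|lborel. log 2 (1 + p2 t * gain beta0 H D 2 (x t))) \<and>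
        r1 + r2 \<le> (1 / T) * (LINT t:{0..T}|lborel.
           log 2 (1 + p1 t * gain beta0 H D 1 (x t) + p2 t * gain beta0 H D 2 (x t)))}"

definition cap_region :: "real \<Rightarrow> real \<Rightarrow> real \<Rightarrow> real \<Rightarrow> real \<Rightarrow> real \<Rightarrow> (real \<times> real) set" where
  "cap_region beta0 H D V T Pbar =
     \<Union> {rate_region beta0 H D T x p1 p2 | x p1 p2.
           feasible_traj V T x \<and> feasible_power Pbar T p1 p2}"

definition cap_hat :: "real \<Rightarrow> real \<Rightarrow> real \<Rightarrow> (real \<times> real) set" where
  "cap_hat beta0 H Pbar =
     {(r1, r2). 0 \<le> r1 \<and> 0 \<le> r2 \<and> r1 + r2 \<le> log 2 (1 + Pbar * beta0 / H^2)}"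

definition is_HFH :: "real \<Rightarrow> real \<Rightarrow> real \<Rightarrow> real \<Rightarrow> real \<Rightarrow> real \<Rightarrow> real \<Rightarrow> (real \<Rightarrow> real) \<Rightarrow> bool" where
  "is_HFH D V T xI xF tI tF x \<longleftrightarrow>
     - D / 2 \<le> xI \<and> xI \<le> xF \<and> xF \<le> D / 2 \<and> 0 \<le> tI \<and> 0 \<le> tF \<and>
     tI + (xF - xI) / V + tF = T \<and>
     (\<forall>t\<in>{0..T}. x t = (if t \<le> tI then xI
                          else if t < T - tF then xI + (t - tI) * V
                          else xF))"

definition is_TDMA :: "real \<Rightarrow> real \<Rightarrow> (real \<Rightarrow> real) \<Rightarrow> (real \<Rightarrow> real) \<Rightarrow> bool" where
  "is_TDMA Pbar T p1 p2 \<longleftrightarrow>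
     (\<forall>t\<in>{0..T}. (p1 t, p2 t) \<in> {(Pbar, 0), (0, Pbar), (0, 0)})"

end

theory Submission imports Defs begin

lemma lint_one:
  fixes f :: "real \<Rightarrow> real"
  assumes "0 \<le> a" "a \<le> b" "b \<le> T"
    and "\<forall>t\<in>{0..T}. f t = (if a \<le> t \<and> t \<le> b then c else 0)"
  shows "(LINT t:{0..T}|lborel. f t) = c * (b - a)"
proof -
  have "(LINT t:{0..T}|lborel. f t) = integral\<^sup>L lborel (\<lambda>t. c * indicator {a..b} t)"
    unfolding set_lebesgue_integral_def
    by (rule Bochner_Integration.integral_cong) (use assms in \<open>auto simp: indicator_def\<close>)
  also have "\<dots> = c * (b - a)" using assms by simp
  finally show ?thesis .
qed

lemma lint_two:
  fixes f :: "real \<Rightarrow> real"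
  assumes "0 \<le> a" "a \<le> b" "b < a2" "a2 \<le> b2" "b2 \<le> T"
    and "\<forall>t\<in>{0..T}. f t = (if a \<le> t \<and> t \<le> b \<or> a2 \<le> t \<and> t \<le> b2 then c else 0)"
  shows "(LINT t:{0..T}|lborel. f t) = c * (b - a) + c * (b2 - a2)"
proof -
  have "(LINT t:{0..T}|lborel. f t) = integral\<^sup>L lborel (\<lambda>t. c * indicator {a..b} t + c * indicator {a2..b2} t)"
    unfolding set_lebesgue_integral_def
    by (rule Bochner_Integration.integral_cong) (use assms in \<open>auto simp: indicator_def\<close>)
  also have "\<dots> = c * (b - a) + c * (b2 - a2)" using assms
    by (subst Bochner_Integration.integral_add) auto
  finally show ?thesis .
qed

lemma lint_le:
  fixes f :: "real \<Rightarrow> real"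
  assumes "0 \<le> T" "0 \<le> c" "\<forall>t\<in>{0..T}. f t \<le> c"
  shows "(LINT t:{0..T}|lborel. f t) \<le> c * T"
proof (cases "set_integrable lborel {0..T} f")
  case True
  have "(LINT t:{0..T}|lborel. f t) \<le> (LINT t:{0..T}|lborel. c)"
  proof (rule set_integral_mono)
    show "set_integrable lborel {0..T} (\<lambda>t. c)"
      unfolding set_integrable_def using assms by (simp add: integrable_real_indicator)
  qed (use True assms in auto)
  also have "\<dots> = c * T" using assms by (simp add: set_integral_const)
  finally show ?thesis .
next
  case False
  then have "(LINT t:{0..T}|lborel. f t) = 0"
    unfolding set_lebesgue_integral_def set_integrable_def
    by (rule not_integrable_integral_eq)
  then show ?thesis using assms by simp
qed

lemma clamp_lip:
  fixes a b lo hi :: real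
  assumes "lo \<le> hi"
  shows "\<bar>max lo (min hi a) - max lo (min hi b)\<bar> \<le> \<bar>a - b\<bar>"
  using assms by (auto simp: max_def min_def abs_if)

lemma lim1: "((\<lambda>T::real. ((1 - D / (V * T)) * r1, (1 - D / (V * T)) * r2)) \<longlongrightarrow> (r1, r2)) at_top"
proof -
  have z: "((\<lambda>T::real. D / V * inverse T) \<longlongrightarrow> D / V * 0) at_top"
    by (intro tendsto_mult tendsto_const tendsto_inverse_0_at_top filterlim_ident)
  have e: "\<And>T::real. D / (V * T) = D / V * inverse T" by (simp add: field_simps)
  have "((\<lambda>T::real. (1 - D / (V * T)) * r1) \<longlongrightarrow> (1 - 0) * r1) at_top"
    unfolding e by (intro tendsto_intros) (use z in simp)
  moreover have "((\<lambda>T::real. (1 - D / (V * T)) * r2) \<longlongrightarrow> (1 - 0) * r2) at_top"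
    unfolding e by (intro tendsto_intros) (use z in simp)
  ultimately show ?thesis using tendsto_Pair by fastforce
qed
lemma gain_bounds:
  assumes "H > 0" "beta0 > 0"
  shows "0 \<le> gain beta0 H D k y \<and> gain beta0 H D k y \<le> beta0 / H^2"
proof -
  have "H^2 \<le> (y - gu_pos D k)^2 + H^2" by simp
  moreover have "0 < H^2" using assms by simp
  moreover have "0 < ((y - gu_pos D k)^2 + H^2) * H^2" using assms by (intro mult_pos_pos add_nonneg_pos) auto
  ultimately have "beta0 / ((y - gu_pos D k)^2 + H^2) \<le> beta0 / H^2"
    using assms by (intro divide_left_mono) auto
  moreover have "0 \<le> beta0 / ((y - gu_pos D k)^2 + H^2)" using assms by (intro divide_nonneg_pos) (auto simp: add_nonneg_pos)
  ultimately show ?thesis unfolding gain_def by simp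
qed

theorem theorem1:
  fixes D H beta0 Pbar V :: real
  assumes "D > 0" and "H > 0" and "beta0 > 0" and "Pbar > 0" and "V > 0"
  shows "(\<forall>T>0. cap_region beta0 H D V T Pbar \<subseteq> cap_hat beta0 H Pbar)
     \<and> (\<forall>r\<in>cap_hat beta0 H Pbar.
          \<exists>rT :: real \<Rightarrow> real \<times> real.
            (rT \<longlongrightarrow> r) at_top \<and>
            (\<forall>\<^sub>F T in at_top. rT T \<in> cap_region beta0 H D V T Pbar \<and>
               (\<exists>x p1 p2 tI tF.
                  is_HFH D V T (- D / 2) (D / 2) tI tF x \<and> feasible_traj V T x \<and>
                  feasible_power Pbar T p1 p2 \<and> is_TDMA Pbar T p1 p2 \<and>
                  rT T \<in> rate_region beta0 H D T x p1 p2)))"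
proof (intro conjI allI impI ballI)
  define C where "C = log 2 (1 + Pbar * beta0 / H^2)"
  have bpos: "0 \<le> Pbar * beta0 / H^2" using assms by simp
  have bpos': "0 \<le> beta0 / H^2" using assms by simp
  have C0: "0 \<le> C" unfolding C_def using bpos by simp
  have gb: "\<And>k y. 0 \<le> gain beta0 H D k y \<and> gain beta0 H D k y \<le> beta0 / H^2"
    using gain_bounds assms by blast
  {
    fix T :: real assume T: "T > 0"
    show "cap_region beta0 H D V T Pbar \<subseteq> cap_hat beta0 H Pbar"
    proof
      fix r assume "r \<in> cap_region beta0 H D V T Pbar"
      then obtain x p1 p2 where fp: "feasible_power Pbar T p1 p2"
        and rr: "r \<in> rate_region beta0 H D T x p1 p2"
        unfolding cap_region_def by blast
      obtain r1 r2 where r: "r = (r1, r2)" by fastforce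
      let ?f = "\<lambda>t. log 2 (1 + p1 t * gain beta0 H D 1 (x t) + p2 t * gain beta0 H D 2 (x t))"
      have pt: "?f t \<le> C" if t: "t \<in> {0..T}" for t
      proof -
        have p: "0 \<le> p1 t" "0 \<le> p2 t" "p1 t + p2 t \<le> Pbar" using fp t unfolding feasible_power_def by auto
        have a: "p1 t * gain beta0 H D 1 (x t) \<le> p1 t * (beta0 / H^2)"
          using p gb by (intro mult_left_mono) auto
        have b: "p2 t * gain beta0 H D 2 (x t) \<le> p2 t * (beta0 / H^2)"
          using p gb by (intro mult_left_mono) auto
        have c: "(p1 t + p2 t) * (beta0 / H^2) \<le> Pbar * (beta0 / H^2)"
          using p bpos' by (intro mult_right_mono) auto
        have n: "0 \<le> p1 t * gain beta0 H D 1 (x t) + p2 t * gain beta0 H D 2 (x t)"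
          using p gb by (simp add: add_nonneg_nonneg)
        have "1 + p1 t * gain beta0 H D 1 (x t) + p2 t * gain beta0 H D 2 (x t) \<le> 1 + Pbar * beta0 / H^2"
        proof -
          have c': "p1 t * (beta0 / H^2) + p2 t * (beta0 / H^2) \<le> Pbar * (beta0 / H^2)"
            using c by (simp only: distrib_right)
          have "Pbar * (beta0 / H^2) = Pbar * beta0 / H^2" by simp
          then show ?thesis using a b c' by linarith
        qed
        then show ?thesis unfolding C_def using n by (subst log_le_cancel_iff) auto
      qed
      have I: "(LINT t:{0..T}|lborel. ?f t) \<le> C * T"
        using lint_le[of T C ?f] T C0 pt by auto
      have "r1 + r2 \<le> (1/T) * (LINT t:{0..T}|lborel. ?f t)" and "0 \<le> r1" "0 \<le> r2"
        using rr r unfolding rate_region_def by auto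
      moreover have "(1/T) * (LINT t:{0..T}|lborel. ?f t) \<le> (1/T) * (C * T)"
        using I T by (intro mult_left_mono) auto
      ultimately have "r1 + r2 \<le> C" using T by simp
      then show "r \<in> cap_hat beta0 H Pbar" unfolding cap_hat_def C_def r using \<open>0 \<le> r1\<close> \<open>0 \<le> r2\<close> by simp
    qed
  }
  fix r assume "r \<in> cap_hat beta0 H Pbar"
  then obtain r1 r2 where r: "r = (r1, r2)" and r1: "0 \<le> r1" and r2: "0 \<le> r2" and rs: "r1 + r2 \<le> C"
    unfolding cap_hat_def C_def by auto
  define lam where "lam = (if r1 + r2 = 0 then 1/2 else r1 / (r1 + r2))"
  have lam: "0 \<le> lam" "lam \<le> 1" "r1 \<le> C * lam" "r2 \<le> C * (1 - lam)"
  proof -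
    show "0 \<le> lam" "lam \<le> 1" unfolding lam_def using r1 r2 by (auto simp: divide_simps)
    have "r1 \<le> C * lam \<and> r2 \<le> C * (1 - lam)"
    proof (cases "r1 + r2 = 0")
      case True then show ?thesis using r1 r2 C0 unfolding lam_def by auto
    next
      case False
      then have s: "r1 + r2 > 0" using r1 r2 by linarith
      have "r1 * (r1 + r2) \<le> r1 * C" using rs r1 by (intro mult_left_mono) auto
      then have a: "r1 \<le> C * lam" unfolding lam_def using False s by (simp add: field_simps)
      have "r2 * (r1 + r2) \<le> r2 * C" using rs r2 by (intro mult_left_mono) auto
      then have b: "r2 \<le> C * (1 - lam)" unfolding lam_def using False s by (simp add: field_simps)
      show ?thesis using a b by simp
    qed
    then show "r1 \<le> C * lam" "r2 \<le> C * (1 - lam)" by auto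
  qed
  define rT where "rT = (\<lambda>T::real. ((1 - D / (V * T)) * r1, (1 - D / (V * T)) * r2))"
  show "\<exists>rT :: real \<Rightarrow> real \<times> real.
            (rT \<longlongrightarrow> r) at_top \<and>
            (\<forall>\<^sub>F T in at_top. rT T \<in> cap_region beta0 H D V T Pbar \<and>
               (\<exists>x p1 p2 tI tF.
                  is_HFH D V T (- D / 2) (D / 2) tI tF x \<and> feasible_traj V T x \<and>
                  feasible_power Pbar T p1 p2 \<and> is_TDMA Pbar T p1 p2 \<and>
                  rT T \<in> rate_region beta0 H D T x p1 p2))"
  proof (intro exI conjI)
    show "(rT \<longlongrightarrow> r) at_top" unfolding rT_def r by (rule lim1)
    show "\<forall>\<^sub>F T in at_top. rT T \<in> cap_region beta0 H D V T Pbar \<and>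
               (\<exists>x p1 p2 tI tF.
                  is_HFH D V T (- D / 2) (D / 2) tI tF x \<and> feasible_traj V T x \<and>
                  feasible_power Pbar T p1 p2 \<and> is_TDMA Pbar T p1 p2 \<and>
                  rT T \<in> rate_region beta0 H D T x p1 p2)"
    proof (rule eventually_mono[OF eventually_gt_at_top[of "D / V"]])
      fix T assume TDV: "D / V < T"
      define L where "L = T - D / V"
      have L: "0 < L" using TDV unfolding L_def by simp
      have DV: "0 < D / V" using assms by simp
      have T: "0 < T" using TDV DV by linarith
      define tI where "tI = lam * L"
      define tF where "tF = (1 - lam) * L"
      have tI: "0 \<le> tI" and tF: "0 \<le> tF" unfolding tI_def tF_def using lam L by auto
      have TtF: "T - tF = tI + D / V" unfolding tI_def tF_def L_def using assms by (simp add: field_simps)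
      define x where "x = (\<lambda>t. if t \<le> tI then - D / 2
                          else if t < T - tF then - D / 2 + (t - tI) * V
                          else D / 2)"
      define p1 where "p1 = (\<lambda>t. Pbar * indicator {0..tI} t)"
      define p2 where "p2 = (\<lambda>t. Pbar * indicator {T - tF..T} t)"
      have HFH: "is_HFH D V T (- D / 2) (D / 2) tI tF x"
        unfolding is_HFH_def using assms tI tF TtF unfolding x_def by (auto simp: field_simps)
      have xc: "x t = max (- D / 2) (min (D / 2) (- D / 2 + (t - tI) * V))" for t
      proof -
        have e1: "(t - tI) * V \<le> 0 \<longleftrightarrow> t \<le> tI" using assms by (simp add: mult_le_0_iff)
        have e3: "t - tI < D / V \<longleftrightarrow> (t - tI) * V < D" using assms by (simp add: pos_less_divide_eq)
        have e2: "(t - tI) * V < D \<longleftrightarrow> t < T - tF" unfolding TtF using e3 by linarith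
        show ?thesis unfolding x_def using e1 e2 assms by (auto simp: max_def min_def)
      qed
      have ft: "feasible_traj V T x"
        unfolding feasible_traj_def
      proof (intro ballI)
        fix s t
        have "\<bar>x t - x s\<bar> \<le> \<bar>(- D / 2 + (t - tI) * V) - (- D / 2 + (s - tI) * V)\<bar>"
          unfolding xc using assms by (intro clamp_lip) simp
        also have "\<dots> = V * \<bar>t - s\<bar>" proof -
          have "(- D / 2 + (t - tI) * V) - (- D / 2 + (s - tI) * V) = (t - s) * V" by (simp add: algebra_simps)
          then show ?thesis using assms by (simp add: abs_mult)
        qed
        finally show "\<bar>x t - x s\<bar> \<le> V * \<bar>t - s\<bar>" .
      qed
      have disj: "tI < T - tF" using TtF DV by simp
      have fp: "feasible_power Pbar T p1 p2"
        unfolding feasible_power_def p1_def p2_def using assms disj by (auto simp: indicator_def)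
      have td: "is_TDMA Pbar T p1 p2"
        unfolding is_TDMA_def p1_def p2_def using assms disj by (auto simp: indicator_def)
      have g1: "gain beta0 H D 1 (- D / 2) = beta0 / H^2" unfolding gain_def gu_pos_def by simp
      have g2: "gain beta0 H D 2 (D / 2) = beta0 / H^2" unfolding gain_def gu_pos_def by simp
      have g1': "gain beta0 H D (Suc 0) (- (D / 2)) = beta0 / H^2" unfolding gain_def gu_pos_def by simp
      have Ce: "log 2 (1 + Pbar * (beta0 / H^2)) = C" unfolding C_def by simp
      have i1: "(LINT t:{0..T}|lborel. log 2 (1 + p1 t * gain beta0 H D 1 (x t))) = C * (tI - 0)"
        by (rule lint_one) (use tI disj tF in \<open>auto simp: p1_def x_def g1 g1' Ce C_def indicator_def\<close>)
      have i2: "(LINT t:{0..T}|lborel. log 2 (1 + p2 t * gain beta0 H D 2 (x t))) = C * (T - (T - tF))"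
        by (rule lint_one) (use tI disj tF in \<open>auto simp: p2_def x_def g2 Ce C_def indicator_def\<close>)
      have i3: "(LINT t:{0..T}|lborel. log 2 (1 + p1 t * gain beta0 H D 1 (x t) + p2 t * gain beta0 H D 2 (x t)))
           = C * (tI - 0) + C * (T - (T - tF))"
        by (rule lint_two) (use tI disj tF in \<open>auto simp: p1_def p2_def x_def g1 g1' g2 Ce C_def indicator_def\<close>)
      have fe: "1 - D / (V * T) = L / T" unfolding L_def using T assms by (simp add: field_simps)
      have q1: "L / T * r1 \<le> 1 / T * (C * (tI - 0))"
        using mult_left_mono[OF lam(3), of L] L T unfolding tI_def by (simp add: field_simps)
      have q2: "L / T * r2 \<le> 1 / T * (C * (T - (T - tF)))"
        using mult_left_mono[OF lam(4), of L] L T unfolding tF_def by (simp add: field_simps)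
      have q3: "L / T * r1 + L / T * r2 \<le> 1 / T * (C * (tI - 0) + C * (T - (T - tF)))"
      proof -
        have "(r1 + r2) * L * T \<le> C * L * T" using rs L T by (intro mult_right_mono) auto
        then show ?thesis using L T unfolding tI_def tF_def by (simp add: field_simps)
      qed
      have rr: "rT T \<in> rate_region beta0 H D T x p1 p2"
        unfolding rate_region_def rT_def fe i1 i2 i3 using q1 q2 q3 L T r1 r2 by auto
      show "rT T \<in> cap_region beta0 H D V T Pbar \<and>
               (\<exists>x p1 p2 tI tF.
                  is_HFH D V T (- D / 2) (D / 2) tI tF x \<and> feasible_traj V T x \<and>
                  feasible_power Pbar T p1 p2 \<and> is_TDMA Pbar T p1 p2 \<and>
                  rT T \<in> rate_region beta0 H D T x p1 p2)"
        using HFH ft fp td rr unfolding cap_region_def by blast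
    qed
  qed
qed

end
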